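(* Let $\omega_s,R_s,R_r,L_s,L_r,L_m>0$ with $L_s>L_m$, $L_r>L_m$, $\sigma=1-\frac{L_m^2}{L_sL_r}$, let $A$, $B$ be the $4\times4$ and $4\times 2$ matrices $$A=\begin{bmatrix} -\frac{R_s}{\sigma L_s} & \omega_s & \frac{R_sL_m}{\sigma L_sL_r} & 0 \\ -\omega_s & -\frac{R_s}{\sigma L_s} & 0 & \frac{R_sL_m}{\sigma L_sL_r}\\ \frac{R_rL_m}{\sigma L_sL_r} & 0 & -\frac{R_r}{\sigma L_r} & \omega_s \\ 0 & \frac{R_rL_m}{\sigma L_sL_r} & -\omega_s & -\frac{R_r}{\sigma L_r} \end{bmatrix},\qquad B=\begin{bmatrix}0_{2\times2}\\ I_{2\times 2}\end{bmatrix},$$ and let $K\in\mathbb{R}^{2\times4}$ be such that $A-BK$ is asymptotically stable. Fix $v_{ds},v_{qs}\in\mathbb{R}$. For $u=(u_1,u_2)\in\mathbb{R}^2$ let $x(u)=-(A-BK)^{-1}[v_{ds}\;v_{qs}\;u_1\;u_2]^T$ and $T_e(u)=\frac{L_m}{\sigma L_sL_r}\big(x_1(u)x_4(u)-x_2(u)x_3(u)\big)$, and write $T_e(u)=u^TQu+b^Tu+a$ with $Q\in\mathbb{R}^{2\times2}$ symmetric, $b\in\mathbb{R}^2$, $a\in\mathbb{R}$ (this $Q$ is positive definite). Then $$a-\tfrac14\, b^TQ^{-1}b=-\frac{v_{ds}^2+v_{qs}^2}{4\omega_sR_s},$$ independently of $K$, $R_r$, $L_s$, $L_r$, $L_m$.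 Equivalently, $\min_{u\in\mathbb{R}^2}T_e(u)=-\frac{v_{ds}^2+v_{qs}^2}{4\omega_sR_s}<0$ whenever $(v_{ds},v_{qs})\neq(0,0)$.
   Context: $T_e$ models the electromagnetic torque of a doubly fed induction generator at the steady state of its electrical dynamics $\dot x=(A-BK)x+[v_{ds}\;v_{qs}\;u_1\;u_2]^T$, with $x=(\varphi_{ds},\varphi_{qs},\varphi_{dr},\varphi_{qr})$ the stator/rotor fluxes. *)

theory Defs
  imports "HOL-Analysis.Analysis"
begin

definition dfig_sigma :: "real \<Rightarrow> real \<Rightarrow> real \<Rightarrow> real" where
  "dfig_sigma Ls Lr Lm = 1 - Lm\<^sup>2 / (Ls * Lr)"

definition dfig_A :: "real \<Rightarrow> real \<Rightarrow> real \<Rightarrow> real \<Rightarrow> real \<Rightarrow> real \<Rightarrow> real^4^4" where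
  "dfig_A ws Rs Rr Ls Lr Lm =
    (let s = dfig_sigma Ls Lr Lm;
         a11 = - Rs / (s * Ls);
         a13 = Rs * Lm / (s * Ls * Lr);
         a31 = Rr * Lm / (s * Ls * Lr);
         a33 = - Rr / (s * Lr)
     in (\<chi> i j.
       if i = 1 then (if j = 1 then a11 else if j = 2 then ws else if j = 3 then a13 else 0)
       else if i = 2 then (if j = 1 then - ws else if j = 2 then a11 else if j = 3 then 0 else a13)
       else if i = 3 then (if j = 1 then a31 else if j = 2 then 0 else if j = 3 then a33 else ws)
       else (if j = 1 then 0 else if j = 2 then a31 else if j = 3 then - ws else a33)))"

definition dfig_B :: "real^2^4" where
  "dfig_B = (\<chi> i j. if (i = 3 \<and> j = 1) \<or> (i = 4 \<and> j = 2) then 1 else 0)"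

text \<open>Asymptotic stability (Hurwitz): every (complex) eigenvalue has negative real part.\<close>
definition hurwitz :: "real^'n^'n \<Rightarrow> bool" where
  "hurwitz M \<longleftrightarrow> (\<forall>(lam::complex) (v::complex^'n). v \<noteq> 0 \<and>
      (\<chi> i j. complex_of_real (M $ i $ j)) *v v = lam *s v \<longrightarrow> Re lam < 0)"

definition dfig_x :: "real^4^4 \<Rightarrow> real^2^4 \<Rightarrow> real^4^2 \<Rightarrow> real \<Rightarrow> real \<Rightarrow> real^2 \<Rightarrow> real^4" where
  "dfig_x A B K vds vqs u =
     - (matrix_inv (A - B ** K) *v
        (\<chi> i. if i = 1 then vds else if i = 2 then vqs else if i = 3 then u $ 1 else u $ 2))"

definition dfig_Te :: "real \<Rightarrow> real \<Rightarrow> real \<Rightarrow> real \<Rightarrow> real \<Rightarrow> real \<Rightarrow> real^4^2 \<Rightarrow> real \<Rightarrow> real \<Rightarrow> real^2 \<Rightarrow> real" where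
  "dfig_Te ws Rs Rr Ls Lr Lm K vds vqs u =
     (let x = dfig_x (dfig_A ws Rs Rr Ls Lr Lm) dfig_B K vds vqs u
      in Lm / (dfig_sigma Ls Lr Lm * Ls * Lr) * (x $ 1 * x $ 4 - x $ 2 * x $ 3))"

end

theory Submission imports Defs begin

lemma Bk: "(dfig_B ** K) $ 1 $ j = 0" "(dfig_B ** K) $ 2 $ j = 0"
  by (simp_all add: matrix_matrix_mult_def dfig_B_def sum_2)

lemma inv_props: assumes "invertible (A::real^'n^'n)" shows "A ** matrix_inv A = mat 1" "matrix_inv A ** A = mat 1"
  using assms unfolding invertible_def matrix_inv_def by (metis (mono_tags, lifting) someI_ex)+

lemma hurwitz_invertible:
  fixes M :: "real^'n^'n"
  assumes "hurwitz M" shows "invertible M"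
proof -
  have "\<forall>y. M *v y = 0 \<longrightarrow> y = 0"
  proof (intro allI impI, rule ccontr)
    fix y assume My: "M *v y = 0" and ny: "y \<noteq> 0"
    let ?v = "\<chi> i. complex_of_real (y$i)"
    have "?v \<noteq> 0" using ny by (simp add: vec_eq_iff)
    moreover have "(\<chi> i j. complex_of_real (M$i$j)) *v ?v = 0 *s ?v"
    proof -
      have "\<And>i. (\<Sum>j\<in>UNIV. M$i$j * y$j) = 0" using My by (simp add: vec_eq_iff matrix_vector_mult_def)
      then have "\<And>i. complex_of_real (\<Sum>j\<in>UNIV. M$i$j * y$j) = 0" by simp
      then show ?thesis by (simp add: vec_eq_iff matrix_vector_mult_def)
    qed
    ultimately have "Re (0::complex) < 0" using assms unfolding hurwitz_def by blast
    then show False by simp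
  qed
  then show ?thesis
    by (simp add: invertible_left_inverse matrix_left_invertible_ker)
qed

lemma mv_neg: "(A::real^'n^'m) *v (- x) = - (A *v x)"
  by (simp add: vec_eq_iff matrix_vector_mult_def sum_negf)

lemma mv_scale: "(A::real^'n^'m) *v (c *\<^sub>R x) = c *\<^sub>R (A *v x)"
  by (simp add: vec_eq_iff matrix_vector_mult_def sum_distrib_left algebra_simps)

lemma sym_inner:
  fixes Q :: "real^2^2"
  assumes "transpose Q = Q"
  shows "u \<bullet> (Q *v v) = v \<bullet> (Q *v u)"
proof -
  have "transpose Q $1$2 = Q$1$2" using assms by simp
  then have "Q$1$2 = Q$2$1" by (simp add: transpose_def)
  then show ?thesis unfolding inner_vec_def matrix_vector_mult_def sum_2 by (simp add: algebra_simps)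
qed

theorem mainTheorem2:
  fixes ws Rs Rr Ls Lr Lm vds vqs a :: real
    and K :: "real^4^2" and Q :: "real^2^2" and b :: "real^2"
  assumes "ws > 0" "Rs > 0" "Rr > 0" "Ls > 0" "Lr > 0" "Lm > 0"
    and "Ls > Lm" "Lr > Lm"
    and "hurwitz (dfig_A ws Rs Rr Ls Lr Lm - dfig_B ** K)"
    and "transpose Q = Q"
    and "\<forall>u::real^2. dfig_Te ws Rs Rr Ls Lr Lm K vds vqs u = u \<bullet> (Q *v u) + b \<bullet> u + a"
  shows "(\<forall>u::real^2. u \<noteq> 0 \<longrightarrow> u \<bullet> (Q *v u) > 0)
       \<and> a - (1/4) * (b \<bullet> (matrix_inv Q *v b)) = - (vds\<^sup>2 + vqs\<^sup>2) / (4 * ws * Rs)"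
proof -
  note ps = assms(1-8)
  define s where "s = dfig_sigma Ls Lr Lm"
  have "Lm * Lm < Ls * Lr" using ps by (metis mult_strict_mono' less_eq_real_def)
  then have "Lm\<^sup>2 / (Ls * Lr) < 1" using ps by (simp add: power2_eq_square)
  then have s0: "s > 0" unfolding s_def dfig_sigma_def by simp
  define a11 where "a11 = - Rs / (s * Ls)"
  define c where "c = Lm / (s * Ls * Lr)"
  define a13 where "a13 = Rs * c"
  have c0: "c > 0" using ps s0 unfolding c_def by simp
  have a130: "a13 > 0" using c0 ps unfolding a13_def by simp
  define M where "M = dfig_A ws Rs Rr Ls Lr Lm - dfig_B ** K"
  have Minv: "invertible M" using hurwitz_invertible assms(9) unfolding M_def by blast
  define N where "N = matrix_inv M"
  have MN: "M ** N = mat 1" "N ** M = mat 1" using inv_props[OF Minv] unfolding N_def by auto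
  have row1: "(M *v x) $ 1 = a11 * x$1 + ws * x$2 + a13 * x$3" for x
    unfolding M_def by (simp add: matrix_vector_mult_def sum_4 Bk dfig_A_def Let_def a11_def a13_def c_def s_def algebra_simps)
  have row2: "(M *v x) $ 2 = - ws * x$1 + a11 * x$2 + a13 * x$4" for x
    unfolding M_def by (simp add: matrix_vector_mult_def sum_4 Bk dfig_A_def Let_def a11_def a13_def c_def s_def algebra_simps)
  define W where "W = (\<lambda>u::real^2. (\<chi> i::4. if i = 1 then vds else if i = 2 then vqs else if i = 3 then u $ 1 else u $ 2))"
  define X where "X = (\<lambda>u. - (N *v W u))"
  have Xdef: "dfig_x (dfig_A ws Rs Rr Ls Lr Lm) dfig_B K vds vqs u = X u" for u
    unfolding dfig_x_def X_def N_def M_def W_def by simp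
  have MX: "M *v X u = - W u" for u
    unfolding X_def by (simp add: matrix_vector_mul_assoc MN mv_neg)
  define F where "F = (\<lambda>y1 y2. (ws * (y1\<^sup>2 + y2\<^sup>2) - vqs * y1 + vds * y2) / Rs)"
  have TeF: "dfig_Te ws Rs Rr Ls Lr Lm K vds vqs u = F (X u $ 1) (X u $ 2)" for u
  proof -
    have e1: "a11 * X u$1 + ws * X u$2 + a13 * X u$3 = - vds" using MX[of u] row1[of "X u"] by (simp add: W_def)
    have e2: "- ws * X u$1 + a11 * X u$2 + a13 * X u$4 = - vqs" using MX[of u] row2[of "X u"] by (simp add: W_def)
    have "a13 * (X u$1 * X u$4 - X u$2 * X u$3) = ws * ((X u$1)\<^sup>2 + (X u$2)\<^sup>2) - vqs * X u$1 + vds * X u$2"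
    proof -
      have "a13 * (X u$1 * X u$4 - X u$2 * X u$3) = X u$1 * (a13 * X u$4) - X u$2 * (a13 * X u$3)" by (simp add: algebra_simps)
      also have "\<dots> = X u$1 * (- vqs + ws * X u$1 - a11 * X u$2) - X u$2 * (- vds - a11 * X u$1 - ws * X u$2)"
      proof -
        have h4: "a13 * X u$4 = - vqs + ws * X u$1 - a11 * X u$2" using e2 by linarith
        have h3: "a13 * X u$3 = - vds - a11 * X u$1 - ws * X u$2" using e1 by linarith
        show ?thesis by (simp only: h3 h4)
      qed
      finally show ?thesis by (simp add: algebra_simps power2_eq_square)
    qed
    then have "c * (X u$1 * X u$4 - X u$2 * X u$3) = F (X u $ 1) (X u $ 2)"
      unfolding F_def a13_def using ps by (simp add: field_simps)
    then show ?thesis unfolding dfig_Te_def Xdef Let_def c_def s_def by simp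
  qed
  define y1 where "y1 = vqs / (2 * ws)"
  define y2 where "y2 = - vds / (2 * ws)"
  define Fs where "Fs = - (vds\<^sup>2 + vqs\<^sup>2) / (4 * ws * Rs)"
  have Fid: "F (y1 + e1) (y2 + e2) = Fs + ws / Rs * (e1\<^sup>2 + e2\<^sup>2)" for e1 e2
    unfolding F_def y1_def y2_def Fs_def using ps by (simp add: field_simps power2_eq_square)
  have Fid': "F (y1 - e1) (y2 - e2) = Fs + ws / Rs * (e1\<^sup>2 + e2\<^sup>2)" for e1 e2
    using Fid[of "-e1" "-e2"] by simp
  define x0 :: "real^4" where "x0 = (\<chi> i. if i = 1 then y1 else if i = 2 then y2 else if i = 3 then (- vds - a11 * y1 - ws * y2) / a13 else (- vqs + ws * y1 - a11 * y2) / a13)"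
  define us :: "real^2" where "us = (\<chi> i. if i = 1 then - ((M *v x0) $ 3) else - ((M *v x0) $ 4))"
  have Wus: "W us = - (M *v x0)"
  proof -
    have "(M *v x0) $ 1 = - vds" unfolding row1 using a130 by (simp add: x0_def field_simps)
    moreover have "(M *v x0) $ 2 = - vqs" unfolding row2 using a130 by (simp add: x0_def field_simps)
    ultimately show ?thesis unfolding W_def us_def by (simp add: vec_eq_iff forall_4)
  qed
  have Xus: "X us = x0"
    unfolding X_def Wus by (simp add: mv_neg matrix_vector_mul_assoc MN)
  define W0 where "W0 = (\<lambda>h::real^2. (\<chi> i::4. if i = 1 then 0 else if i = 2 then 0 else if i = 3 then h $ 1 else h $ 2))"
  define E where "E = (\<lambda>h. - (N *v W0 h))"
  have Wp: "W (us + h) = W us + W0 h" "W (us - h) = W us - W0 h" for h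
    unfolding W_def W0_def by (simp_all add: vec_eq_iff forall_4)
  have Xp: "X (us + h) = x0 + E h" for h
    unfolding Xus[symmetric] X_def E_def Wp by (simp add: matrix_vector_right_distrib)
  have Xm: "X (us - h) = x0 - E h" for h
    unfolding Xus[symmetric] X_def E_def Wp by (simp add: matrix_vector_mult_diff_distrib)
  define g where "g = (\<lambda>u::real^2. u \<bullet> (Q *v u) + b \<bullet> u + a)"
  have gT: "g u = F (X u $ 1) (X u $ 2)" for u using assms(11) TeF unfolding g_def by simp
  have gus: "g us = Fs" using gT[of us] Fid[of 0 0] unfolding Xus by (simp add: x0_def)
  have gp: "g (us + h) = Fs + ws / Rs * ((E h $ 1)\<^sup>2 + (E h $ 2)\<^sup>2)" for h
    using gT[of "us + h"] Fid unfolding Xp by (simp add: x0_def)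
  have gm: "g (us - h) = Fs + ws / Rs * ((E h $ 1)\<^sup>2 + (E h $ 2)\<^sup>2)" for h
    using gT[of "us - h"] Fid' unfolding Xm by (simp add: x0_def)
  define cv where "cv = 2 *\<^sub>R (Q *v us) + b"
  have sy: "us \<bullet> (Q *v h) = h \<bullet> (Q *v us)" for h using sym_inner[OF assms(10)] by blast
  have exp_p: "g (us + h) = g us + h \<bullet> cv + h \<bullet> (Q *v h)" for h
    unfolding g_def cv_def using sy[of h]
    by (simp add: matrix_vector_right_distrib inner_add_left inner_add_right inner_commute[of b] algebra_simps)
  have exp_m: "g (us - h) = g us - h \<bullet> cv + h \<bullet> (Q *v h)" for h
    unfolding g_def cv_def using sy[of h]
    by (simp add: matrix_vector_mult_diff_distrib inner_diff_left inner_diff_right inner_add_right inner_commute[of b] algebra_simps)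
  have lin0: "h \<bullet> cv = 0" for h using exp_p[of h] exp_m[of h] gp[of h] gm[of h] by linarith
  have cv0: "cv = 0" using lin0[of cv] by simp
  have bQ: "b = - (2 *\<^sub>R (Q *v us))" using cv0 unfolding cv_def by (simp add: algebra_simps eq_neg_iff_add_eq_0)
  have Einj: "h = 0" if "E h $ 1 = 0" "E h $ 2 = 0" for h
  proof -
    have ME: "M *v E h = - W0 h" unfolding E_def by (simp add: mv_neg matrix_vector_mul_assoc MN)
    have "a13 * E h $ 3 = 0" using ME row1[of "E h"] that by (simp add: W0_def)
    then have 3: "E h $ 3 = 0" using a130 by simp
    have "a13 * E h $ 4 = 0" using ME row2[of "E h"] that by (simp add: W0_def)
    then have 4: "E h $ 4 = 0" using a130 by simp
    have "E h = 0" using that 3 4 by (simp add: vec_eq_iff forall_4)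
    then have "W0 h = 0" using ME by simp
    then show "h = 0" unfolding W0_def by (simp add: vec_eq_iff forall_2 forall_4)
  qed
  have pd: "\<forall>u::real^2. u \<noteq> 0 \<longrightarrow> u \<bullet> (Q *v u) > 0"
  proof (intro allI impI)
    fix h :: "real^2" assume h: "h \<noteq> 0"
    then have "E h $ 1 \<noteq> 0 \<or> E h $ 2 \<noteq> 0" using Einj by blast
    then have "(E h $ 1)\<^sup>2 + (E h $ 2)\<^sup>2 > 0" by (simp add: sum_power2_gt_zero_iff)
    then have "ws / Rs * ((E h $ 1)\<^sup>2 + (E h $ 2)\<^sup>2) > 0" using ps by simp
    then show "h \<bullet> (Q *v h) > 0" using exp_p[of h] gp[of h] gus lin0[of h] by linarith
  qed
  have Qinv: "invertible Q"
  proof -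
    have "\<forall>h. Q *v h = 0 \<longrightarrow> h = 0" using pd by force
    then show ?thesis by (simp add: invertible_left_inverse matrix_left_invertible_ker)
  qed
  have Ib: "matrix_inv Q *v b = - (2 *\<^sub>R us)"
    unfolding bQ by (simp add: mv_neg mv_scale matrix_vector_mul_assoc inv_props[OF Qinv])
  have "b \<bullet> us = - 2 * (us \<bullet> (Q *v us))"
    unfolding bQ by (simp add: inner_commute)
  then have "a - (1/4) * (b \<bullet> (matrix_inv Q *v b)) = g us"
    unfolding Ib g_def by simp
  then show ?thesis using pd gus Fs_def by simp
qed
end
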